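(* Let $R$ be a relation with $n$ tuples over attributes $F_1\cup F_2$, where $J=F_1\cap F_2$ is a categorical join key with domain of size $d\ge 2$ such that each value of $J$ appears exactly $n/d$ times in $R$, and the numerical feature values of the tuples of $R$ are independent random vectors with a common distribution, not correlated with $J$. Let $R_{\Join}=\pi_{F_1}(R)\Join_J\pi_{F_2}(R)$ (projections keep duplicates, so each projection has $n$ tuples), and let $s'=\gamma(R_{\Join})$, i.e. $s'[c]=|R_{\Join}|$ and $s'[p]=\sum_{t\in R_{\Join}}p(t)$ for every monomial $p$. Define, for features $f_1\in F_1\setminus J$, $f_2\in F_2\setminus J$, $$\hat s[f_1f_2]=\frac{1-n}{1-d}\frac{s'[f_1f_2]}{s'[c]}+\frac{n-d}{1-d}\frac{s'[f_1]}{s'[c]}\frac{s'[f_2]}{s'[c]},$$ and $\hat s[p]=s'[p]/s'[c]$ for every other monomial $p$ of order $1$ or $2$ in the features of $(F_1\cup F_2)\setminus J$. Then for every monomial $p$ of order $1$ or $2$ in these features, $\mathbb E[\hat s[p]]=\mathbb E[p]$, where $\mathbb E[p]$ is the expected value of $p$ under the common distribution of the tuples' feature values; i.e. $\hat s$ is an unbiased estimator of the (normalized) monomial statistics of $\pi_{F_1\cup F_2}(R)$.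
   Context: Monomials of order 1 are single features $f$; monomials of order 2 are products $f_1f_2$ of two (possibly equal) features. The join $\Join_J$ is the natural (bag) join on $J$, producing for each value of $J$ the Cartesian product of matching tuples. *)

theory Defs
  imports "HOL-Probability.Probability" "HOL-Library.Multiset"
begin

text \<open>Tuples of R are indexed by i < n; key i is the value of the join key J.
  Numerical features of tuple i are the random vector X i (a function on features).
  A = F1 - J, B = F2 - J (disjoint).\<close>

text \<open>Index pairs of the bag join of pi_F1(R) and pi_F2(R) on J.\<close>
definition join_idx :: "nat \<Rightarrow> (nat \<Rightarrow> 'k) \<Rightarrow> (nat \<times> nat) set" where
  "join_idx n key = {(i, j). i < n \<and> j < n \<and> key i = key j}"

definition join_tuple :: "'f set \<Rightarrow> (nat \<Rightarrow> 'a \<Rightarrow> 'f \<Rightarrow> real) \<Rightarrow> nat \<times> nat \<Rightarrow> 'a \<Rightarrow> 'f \<Rightarrow> real" where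
  "join_tuple A X ij \<omega> f = (if f \<in> A then X (fst ij) \<omega> f else X (snd ij) \<omega> f)"

definition mono_eval :: "'f multiset \<Rightarrow> ('f \<Rightarrow> real) \<Rightarrow> real" where
  "mono_eval p t = prod_mset (image_mset t p)"

definition gamma_c :: "nat \<Rightarrow> (nat \<Rightarrow> 'k) \<Rightarrow> real" where
  "gamma_c n key = real (card (join_idx n key))"

definition gamma_mono :: "'f set \<Rightarrow> (nat \<Rightarrow> 'a \<Rightarrow> 'f \<Rightarrow> real) \<Rightarrow> nat \<Rightarrow> (nat \<Rightarrow> 'k)
    \<Rightarrow> 'f multiset \<Rightarrow> 'a \<Rightarrow> real" where
  "gamma_mono A X n key p \<omega> = (\<Sum>ij\<in>join_idx n key. mono_eval p (join_tuple A X ij \<omega>))"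

definition shat :: "'f set \<Rightarrow> 'f set \<Rightarrow> (nat \<Rightarrow> 'a \<Rightarrow> 'f \<Rightarrow> real) \<Rightarrow> nat \<Rightarrow> nat
    \<Rightarrow> (nat \<Rightarrow> 'k) \<Rightarrow> 'f multiset \<Rightarrow> 'a \<Rightarrow> real" where
  "shat A B X n d key p \<omega> =
    (let c = gamma_c n key; s = (\<lambda>q. gamma_mono A X n key q \<omega>) in
     if (\<exists>f1\<in>A. \<exists>f2\<in>B. p = {#f1, f2#}) then
       (let f1 = (THE f. f \<in> A \<and> f \<in># p); f2 = (THE f. f \<in> B \<and> f \<in># p) in
        (1 - real n) / (1 - real d) * (s p / c)
        + (real n - real d) / (1 - real d) * (s {#f1#} / c) * (s {#f2#} / c))
     else s p / c)"

end

theory Submission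
  imports Defs
begin

lemma alg:
  fixes N m d u v :: real
  assumes N: "N = m * d" and "m > 0" and "d \<ge> 2"
  shows "(1 - N) / (1 - d) / (N * m) * (N * u + (N * m - N) * v)
       + (N - d) / (1 - d) * (m * m) / ((N * m) * (N * m)) * (N * u + (N * N - N) * v) = u"
proof -
  have d1: "1 - d \<noteq> 0" using assms by simp
  have m0: "m \<noteq> 0" and d0: "d \<noteq> 0" using assms by auto
  have N0: "N \<noteq> 0" using N m0 d0 by simp
  have e1: "(1 - N) / (1 - d) / (N * m) * (N * u + (N * m - N) * v) = (1 - N) * (u + (m - 1) * v) / ((1 - d) * m)"
    using N0 m0 d1 by (simp add: field_simps)
  have e2: "(N - d) / (1 - d) * (m * m) / ((N * m) * (N * m)) * (N * u + (N * N - N) * v)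
      = (m - 1) * (u + (N - 1) * v) / ((1 - d) * m)"
    using N0 m0 d1 d0 unfolding N by (simp add: field_simps)
  have num: "(1 - N) * (u + (m - 1) * v) + (m - 1) * (u + (N - 1) * v) = u * ((1 - d) * m)"
    unfolding N by (simp add: algebra_simps)
  show ?thesis unfolding e1 e2 add_divide_distrib[symmetric] num using m0 d1 by simp
qed


lemma join_idx_Sigma:
  "join_idx n key = Sigma {..<n} (\<lambda>i. {j. j < n \<and> key j = key i})"
  unfolding join_idx_def by auto

lemma finite_join_idx: "finite (join_idx n key)"
  unfolding join_idx_Sigma by auto

lemma row_card:
  assumes "\<forall>i<n. key i \<in> K" and "\<forall>k\<in>K. card {i. i < n \<and> key i = k} = m" and "i < n"
  shows "card {j. j < n \<and> key j = key i} = m"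
  using assms by auto

lemma sum_fst:
  fixes h :: "nat \<Rightarrow> real"
  assumes "\<forall>i<n. key i \<in> K" and "\<forall>k\<in>K. card {i. i < n \<and> key i = k} = m"
  shows "(\<Sum>ij\<in>join_idx n key. h (fst ij)) = real m * (\<Sum>i<n. h i)"
proof -
  have "(\<Sum>ij\<in>join_idx n key. h (fst ij)) = (\<Sum>i<n. \<Sum>j\<in>{j. j < n \<and> key j = key i}. h i)"
    unfolding join_idx_Sigma by (subst sum.Sigma) (auto simp: split_def)
  also have "\<dots> = (\<Sum>i<n. real m * h i)"
    using row_card[OF assms] by (intro sum.cong) auto
  finally show ?thesis by (simp add: sum_distrib_left)
qed

lemma swap_join_idx: "prod.swap ` join_idx n key = join_idx n key"
  unfolding join_idx_def by auto

lemma sum_swap: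
  fixes h :: "nat \<times> nat \<Rightarrow> real"
  shows "(\<Sum>ij\<in>join_idx n key. h (prod.swap ij)) = (\<Sum>ij\<in>join_idx n key. h ij)"
proof -
  have "(\<Sum>ij\<in>join_idx n key. h ij) = (\<Sum>ij\<in>prod.swap ` join_idx n key. h ij)"
    by (simp add: swap_join_idx)
  also have "\<dots> = (\<Sum>ij\<in>join_idx n key. h (prod.swap ij))"
    by (subst sum.reindex) (auto intro: inj_onI)
  finally show ?thesis by simp
qed

lemma sum_snd:
  fixes h :: "nat \<Rightarrow> real"
  assumes "\<forall>i<n. key i \<in> K" and "\<forall>k\<in>K. card {i. i < n \<and> key i = k} = m"
  shows "(\<Sum>ij\<in>join_idx n key. h (snd ij)) = real m * (\<Sum>i<n. h i)"
  using sum_swap[of "\<lambda>ij. h (fst ij)" n key] sum_fst[OF assms, of h] by simp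

lemma card_join:
  assumes "\<forall>i<n. key i \<in> K" and "\<forall>k\<in>K. card {i. i < n \<and> key i = k} = m"
  shows "real (card (join_idx n key)) = real n * real m"
  using sum_fst[OF assms, of "\<lambda>_. 1"] by simp

lemma sum_diag:
  fixes u v :: real
  assumes "\<forall>i<n. key i \<in> K" and "\<forall>k\<in>K. card {i. i < n \<and> key i = k} = m"
  shows "(\<Sum>ij\<in>join_idx n key. if fst ij = snd ij then u else v)
     = real n * u + (real n * real m - real n) * v"
proof -
  have eq: "(\<lambda>ij. if fst ij = snd ij then u else v) = (\<lambda>ij. v + (if fst ij = snd ij then u - v else 0))"
    by auto
  have "(\<Sum>ij\<in>join_idx n key. (if fst ij = snd ij then u - v else 0))
      = (\<Sum>ij\<in>{ij \<in> join_idx n key. fst ij = snd ij}. u - v)"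
    by (rule sum.inter_filter[symmetric]) (rule finite_join_idx)
  also have "{ij \<in> join_idx n key. fst ij = snd ij} = (\<lambda>i. (i,i)) ` {..<n}"
    unfolding join_idx_def by auto
  also have "(\<Sum>ij\<in>(\<lambda>i. (i,i)) ` {..<n}. u - v) = real n * (u - v)"
    by (subst sum.reindex) (auto intro: inj_onI)
  finally have d: "(\<Sum>ij\<in>join_idx n key. (if fst ij = snd ij then u - v else 0)) = real n * (u - v)" .
  show ?thesis unfolding eq sum.distrib d using card_join[OF assms]
    by (simp add: algebra_simps)
qed

lemma sum_diag2:
  fixes u v :: real
  shows "(\<Sum>i<n. \<Sum>j<n. if i = j then u else v) = real n * u + (real n * real n - real n) * v"
proof -
  have "(\<Sum>i<n. \<Sum>j<n. if i = j then u else v) = (\<Sum>i<n. u + (real n - 1) * v)"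
  proof (intro sum.cong refl)
    fix i assume i: "i \<in> {..<n}"
    have "(\<Sum>j<n. if i = j then u else v) = (\<Sum>j<n. v + (if i = j then u - v else 0))"
      by (intro sum.cong) auto
    also have "\<dots> = real n * v + (u - v)" using i by (simp add: sum.distrib)
    finally show "(\<Sum>j<n. if i = j then u else v) = u + (real n - 1) * v" by (simp add: algebra_simps)
  qed
  also have "\<dots> = real n * u + (real n * real n - real n) * v" by (simp add: algebra_simps)
  finally show ?thesis .
qed


context prob_space begin
lemma single_facts:
  fixes X :: "nat \<Rightarrow> 'a \<Rightarrow> 'f \<Rightarrow> real" and D :: "('f \<Rightarrow> real) measure"
  assumes meas: "X i \<in> measurable M (PiM (A \<union> B) (\<lambda>_. borel))"
    and dist: "distr M (PiM (A \<union> B) (\<lambda>_. borel)) (X i) = D"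
    and intg: "\<forall>f\<in>A \<union> B. \<forall>g\<in>A \<union> B. integrable D (\<lambda>x. x f * x g)"
    and f: "f \<in> A \<union> B" and g: "g \<in> A \<union> B"
  shows "integrable M (\<lambda>\<omega>. X i \<omega> f)" "expectation (\<lambda>\<omega>. X i \<omega> f) = (\<integral>x. x f \<partial>D)"
    "integrable M (\<lambda>\<omega>. X i \<omega> f * X i \<omega> g)" "expectation (\<lambda>\<omega>. X i \<omega> f * X i \<omega> g) = (\<integral>x. x f * x g \<partial>D)"
proof -
  let ?P = "PiM (A \<union> B) (\<lambda>_. borel) :: ('f \<Rightarrow> real) measure"
  have mf: "(\<lambda>x. x f) \<in> borel_measurable ?P"
    using f by (rule measurable_component_singleton)
  have mg: "(\<lambda>x. x g) \<in> borel_measurable ?P"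
    using g by (rule measurable_component_singleton)
  have mfg: "(\<lambda>x. x f * x g) \<in> borel_measurable ?P"
    using mf mg by (rule borel_measurable_times)
  have mff: "(\<lambda>x. (x f)^2) \<in> borel_measurable ?P"
    using mf by (rule borel_measurable_power)
  have pD: "prob_space D" unfolding dist[symmetric] by (rule prob_space_distr[OF meas])
  have "integrable D (\<lambda>x. x f * x f)" using intg f by blast
  hence "integrable D (\<lambda>x. (x f)^2)" by (simp add: power2_eq_square)
  moreover have mfD: "(\<lambda>x. x f) \<in> borel_measurable D"
    unfolding dist[symmetric] measurable_distr_eq1 by (rule mf)
  ultimately have iD: "integrable D (\<lambda>x. x f)"
    using finite_measure.square_integrable_imp_integrable[OF prob_space.finite_measure[OF pD] mfD] by blast
  thus "integrable M (\<lambda>\<omega>. X i \<omega> f)"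
    unfolding dist[symmetric] using integrable_distr_eq[OF meas mf] by simp
  show "expectation (\<lambda>\<omega>. X i \<omega> f) = (\<integral>x. x f \<partial>D)"
    unfolding dist[symmetric] using integral_distr[OF meas mf] by simp
  have "integrable D (\<lambda>x. x f * x g)" using intg f g by blast
  thus "integrable M (\<lambda>\<omega>. X i \<omega> f * X i \<omega> g)"
    unfolding dist[symmetric] using integrable_distr_eq[OF meas mfg] by simp
  show "expectation (\<lambda>\<omega>. X i \<omega> f * X i \<omega> g) = (\<integral>x. x f * x g \<partial>D)"
    unfolding dist[symmetric] using integral_distr[OF meas mfg] by simp
qed
lemma pair_facts:
  fixes X :: "nat \<Rightarrow> 'a \<Rightarrow> 'f \<Rightarrow> real" and D :: "('f \<Rightarrow> real) measure"
  assumes meas: "\<forall>i<n. X i \<in> measurable M (PiM (A \<union> B) (\<lambda>_. borel))"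
    and ind: "indep_vars (\<lambda>_. PiM (A \<union> B) (\<lambda>_. borel)) X {..<n}"
    and dist: "\<forall>i<n. distr M (PiM (A \<union> B) (\<lambda>_. borel)) (X i) = D"
    and intg: "\<forall>f\<in>A \<union> B. \<forall>g\<in>A \<union> B. integrable D (\<lambda>x. x f * x g)"
    and f: "f \<in> A \<union> B" and g: "g \<in> A \<union> B" and i: "i < n" and j: "j < n"
  shows "integrable M (\<lambda>\<omega>. X i \<omega> f * X j \<omega> g)"
    "expectation (\<lambda>\<omega>. X i \<omega> f * X j \<omega> g) =
      (if i = j then (\<integral>x. x f * x g \<partial>D) else (\<integral>x. x f \<partial>D) * (\<integral>x. x g \<partial>D))"
proof -
  have conj: "integrable M (\<lambda>\<omega>. X i \<omega> f * X j \<omega> g) \<and> expectation (\<lambda>\<omega>. X i \<omega> f * X j \<omega> g) =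
      (if i = j then (\<integral>x. x f * x g \<partial>D) else (\<integral>x. x f \<partial>D) * (\<integral>x. x g \<partial>D))"
  proof (cases "i = j")
    case True
    have "X i \<in> measurable M (PiM (A \<union> B) (\<lambda>_. borel))" "distr M (PiM (A \<union> B) (\<lambda>_. borel)) (X i) = D"
      using meas dist i by auto
    from single_facts[of X i A B D f g, OF this intg f g] True show ?thesis by simp
  next
    case False
    define h where "h k = (if k = i then f else g)" for k
    have sub: "{i, j} \<subseteq> {..<n}" using i j by auto
    have hm: "(\<lambda>x. x (h k)) \<in> measurable (PiM (A \<union> B) (\<lambda>_. borel)) borel" if "k \<in> {i,j}" for k
      by (rule measurable_component_singleton) (use f g in \<open>simp add: h_def\<close>)
    have ind2: "indep_vars (\<lambda>_. borel) (\<lambda>k \<omega>. X k \<omega> (h k)) {i, j}"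
      using indep_vars_compose2[OF indep_vars_subset[OF ind sub] hm] by simp
    have sf: "integrable M (\<lambda>\<omega>. X k \<omega> (h k)) \<and> expectation (\<lambda>\<omega>. X k \<omega> (h k)) = (\<integral>x. x (h k) \<partial>D)"
      if k: "k \<in> {i,j}" for k
    proof -
      have m1: "X k \<in> measurable M (PiM (A \<union> B) (\<lambda>_. borel))" using meas sub k by blast
      have d1: "distr M (PiM (A \<union> B) (\<lambda>_. borel)) (X k) = D" using dist sub k by blast
      have hk: "h k \<in> A \<union> B" using f g by (simp add: h_def)
      show ?thesis using single_facts(1,2)[of X k A B D "h k" "h k", OF m1 d1 intg hk hk] by blast
    qed
    have int2: "\<And>k. k \<in> {i,j} \<Longrightarrow> integrable M (\<lambda>\<omega>. X k \<omega> (h k))"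
      using sf by blast
    have pr: "(\<lambda>\<omega>. \<Prod>k\<in>{i,j}. X k \<omega> (h k)) = (\<lambda>\<omega>. X i \<omega> f * X j \<omega> g)"
      using False by (auto simp: h_def)
    have I1: "integrable M (\<lambda>\<omega>. X i \<omega> f * X j \<omega> g)"
      using indep_vars_integrable[OF _ ind2 int2] unfolding pr by simp
    have "expectation (\<lambda>\<omega>. X i \<omega> f * X j \<omega> g) = (\<Prod>k\<in>{i,j}. expectation (\<lambda>\<omega>. X k \<omega> (h k)))"
      using indep_vars_lebesgue_integral[OF _ ind2 int2] unfolding pr by simp
    also have "\<dots> = expectation (\<lambda>\<omega>. X i \<omega> (h i)) * expectation (\<lambda>\<omega>. X j \<omega> (h j))"
    proof -
      have "(\<Prod>k\<in>{i,j}. F k) = F i * F j" for F :: "nat \<Rightarrow> real" using False by simp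
      thus ?thesis .
    qed
    also have "\<dots> = (\<integral>x. x f \<partial>D) * (\<integral>x. x g \<partial>D)"
    proof -
      have hi: "h i = f" "h j = g" using False by (simp_all add: h_def)
      have "expectation (\<lambda>\<omega>. X i \<omega> (h i)) = (\<integral>x. x (h i) \<partial>D)"
        by (rule conjunct2[OF sf]) (rule insertI1)
      moreover have "expectation (\<lambda>\<omega>. X j \<omega> (h j)) = (\<integral>x. x (h j) \<partial>D)"
        by (rule conjunct2[OF sf]) (rule insertI2, rule insertI1)
      ultimately show ?thesis unfolding hi by (rule arg_cong2[where f="(*)"])
    qed
    finally have E1: "expectation (\<lambda>\<omega>. X i \<omega> f * X j \<omega> g) = (\<integral>x. x f \<partial>D) * (\<integral>x. x g \<partial>D)" .
    show ?thesis unfolding if_not_P[OF False] using I1 E1 by (rule conjI)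
  qed
  show "integrable M (\<lambda>\<omega>. X i \<omega> f * X j \<omega> g)" by (rule conjunct1[OF conj])
  show "expectation (\<lambda>\<omega>. X i \<omega> f * X j \<omega> g) =
      (if i = j then (\<integral>x. x f * x g \<partial>D) else (\<integral>x. x f \<partial>D) * (\<integral>x. x g \<partial>D))" by (rule conjunct2[OF conj])
qed

end


context prob_space begin

lemma E_Ssum:
  fixes Y :: "'i \<Rightarrow> 'a \<Rightarrow> real"
  assumes "finite S" and "\<And>x. x \<in> S \<Longrightarrow> integrable M (Y x)"
    and "\<And>x. x \<in> S \<Longrightarrow> expectation (Y x) = e x"
  shows "integrable M (\<lambda>\<omega>. \<Sum>x\<in>S. Y x \<omega>)" "expectation (\<lambda>\<omega>. \<Sum>x\<in>S. Y x \<omega>) = (\<Sum>x\<in>S. e x)"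
proof -
  show "integrable M (\<lambda>\<omega>. \<Sum>x\<in>S. Y x \<omega>)" by (rule Bochner_Integration.integrable_sum) (rule assms(2))
  have "expectation (\<lambda>\<omega>. \<Sum>x\<in>S. Y x \<omega>) = (\<Sum>x\<in>S. expectation (Y x))"
    by (rule Bochner_Integration.integral_sum) (rule assms(2))
  also have "\<dots> = (\<Sum>x\<in>S. e x)" by (rule sum.cong[OF refl]) (rule assms(3))
  finally show "expectation (\<lambda>\<omega>. \<Sum>x\<in>S. Y x \<omega>) = (\<Sum>x\<in>S. e x)" .
qed

lemma E_msum:
  fixes Y :: "nat \<Rightarrow> 'a \<Rightarrow> real"
  assumes "\<And>i. i < n \<Longrightarrow> integrable M (Y i)" and "\<And>i. i < n \<Longrightarrow> expectation (Y i) = e"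
  shows "expectation (\<lambda>\<omega>. c * (\<Sum>i<n. Y i \<omega>)) = c * real n * e"
proof -
  have "expectation (\<lambda>\<omega>. c * (\<Sum>i<n. Y i \<omega>)) = c * expectation (\<lambda>\<omega>. \<Sum>i<n. Y i \<omega>)"
    by (rule integral_mult_right_zero)
  also have "expectation (\<lambda>\<omega>. \<Sum>i<n. Y i \<omega>) = (\<Sum>i<n. e)"
    by (rule E_Ssum(2)) (use assms in auto)
  finally show ?thesis by simp
qed

end

theorem proposition2:
  fixes M :: "'a measure" and X :: "nat \<Rightarrow> 'a \<Rightarrow> 'f \<Rightarrow> real"
    and key :: "nat \<Rightarrow> 'k" and K :: "'k set" and A B :: "'f set"
    and D :: "('f \<Rightarrow> real) measure" and n d :: nat and p :: "'f multiset"
  assumes "prob_space M"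
    and "finite A" and "finite B" and "A \<inter> B = {}"
    and "finite K" and "card K = d" and "d \<ge> 2" and "n > 0" and "d dvd n"
    and "\<forall>i<n. key i \<in> K"
    and "\<forall>k\<in>K. card {i. i < n \<and> key i = k} = n div d"
    and "\<forall>i<n. X i \<in> measurable M (PiM (A \<union> B) (\<lambda>_. borel))"
    and "prob_space.indep_vars M (\<lambda>_. PiM (A \<union> B) (\<lambda>_. borel)) X {..<n}"
    and "\<forall>i<n. distr M (PiM (A \<union> B) (\<lambda>_. borel)) (X i) = D"
    and "\<forall>f\<in>A \<union> B. \<forall>g\<in>A \<union> B. integrable D (\<lambda>x. x f * x g)"
    and "set_mset p \<subseteq> A \<union> B" and "size p = 1 \<or> size p = 2"
  shows "prob_space.expectation M (shat A B X n d key p) = (\<integral>x. mono_eval p x \<partial>D)"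
proof -
  interpret P: prob_space M by (rule assms(1))
  define m where "m = n div d"
  have nmd: "real n = real m * real d"
    using \<open>d dvd n\<close> unfolding m_def by (metis dvd_div_mult_self of_nat_mult)
  have mpos: "real m > 0" using nmd \<open>n > 0\<close> by (cases "m = 0") auto
  have dge: "real d \<ge> 2" using \<open>d \<ge> 2\<close> by simp
  have keyK: "\<forall>i<n. key i \<in> K" by (rule assms(10))
  have cnt: "\<forall>k\<in>K. card {i. i < n \<and> key i = k} = m" using assms(11) unfolding m_def .
  have c: "gamma_c n key = real n * real m" unfolding gamma_c_def by (rule card_join[OF keyK cnt])
  have disj: "\<And>f. f \<in> B \<Longrightarrow> f \<notin> A" using assms(4) by blast
  have sf: "integrable M (\<lambda>\<omega>. X i \<omega> f) \<and> P.expectation (\<lambda>\<omega>. X i \<omega> f) = (\<integral>x. x f \<partial>D)"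
    if "i < n" "f \<in> A \<union> B" for i f
  proof -
    have m1: "X i \<in> measurable M (PiM (A \<union> B) (\<lambda>_. borel))" using assms(12) that(1) by blast
    have d1: "distr M (PiM (A \<union> B) (\<lambda>_. borel)) (X i) = D" using assms(14) that(1) by blast
    show ?thesis using P.single_facts(1,2)[of X i A B D f f, OF m1 d1 assms(15) that(2) that(2)] by blast
  qed
  have sf2: "integrable M (\<lambda>\<omega>. X i \<omega> f * X i \<omega> g) \<and> P.expectation (\<lambda>\<omega>. X i \<omega> f * X i \<omega> g) = (\<integral>x. x f * x g \<partial>D)"
    if "i < n" "f \<in> A \<union> B" "g \<in> A \<union> B" for i f g
  proof -
    have m1: "X i \<in> measurable M (PiM (A \<union> B) (\<lambda>_. borel))" using assms(12) that(1) by blast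
    have d1: "distr M (PiM (A \<union> B) (\<lambda>_. borel)) (X i) = D" using assms(14) that(1) by blast
    show ?thesis using P.single_facts(3,4)[of X i A B D f g, OF m1 d1 assms(15) that(2) that(3)] by blast
  qed
  have pf: "integrable M (\<lambda>\<omega>. X i \<omega> f * X j \<omega> g) \<and> P.expectation (\<lambda>\<omega>. X i \<omega> f * X j \<omega> g) =
      (if i = j then (\<integral>x. x f * x g \<partial>D) else (\<integral>x. x f \<partial>D) * (\<integral>x. x g \<partial>D))"
    if "i < n" "j < n" "f \<in> A \<union> B" "g \<in> A \<union> B" for i j f g
    using P.pair_facts[of n X A B D f g i j, OF assms(12,13,14,15) that(3,4,1,2)] by blast
  have noncross: "shat A B X n d key q \<omega> = gamma_mono A X n key q \<omega> / gamma_c n key"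
    if "\<not> (\<exists>f1\<in>A. \<exists>f2\<in>B. q = {#f1, f2#})" for q \<omega>
    using that unfolding shat_def Let_def by simp
  have Enorm: "P.expectation (\<lambda>\<omega>. real m * (\<Sum>i<n. Y i \<omega>) / gamma_c n key) = e"
    if "\<And>i. i < n \<Longrightarrow> integrable M (Y i)" "\<And>i. i < n \<Longrightarrow> P.expectation (Y i) = e" for Y e
  proof -
    have "P.expectation (\<lambda>\<omega>. real m * (\<Sum>i<n. Y i \<omega>) / gamma_c n key)
        = P.expectation (\<lambda>\<omega>. real m * (\<Sum>i<n. Y i \<omega>)) / gamma_c n key"
      by (rule integral_divide_zero)
    also have "P.expectation (\<lambda>\<omega>. real m * (\<Sum>i<n. Y i \<omega>)) = real m * real n * e"
      by (rule P.E_msum) (use that in auto)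
    finally show ?thesis unfolding c using mpos \<open>n > 0\<close> by simp
  qed
  have s1: "gamma_mono A X n key {#f#} \<omega> = real m * (\<Sum>i<n. X i \<omega> f)" for f \<omega>
  proof (cases "f \<in> A")
    case True
    have "gamma_mono A X n key {#f#} \<omega> = (\<Sum>ij\<in>join_idx n key. X (fst ij) \<omega> f)"
      unfolding gamma_mono_def mono_eval_def join_tuple_def using True by simp
    then show ?thesis using sum_fst[OF keyK cnt, of "\<lambda>i. X i \<omega> f"] by simp
  next
    case False
    have "gamma_mono A X n key {#f#} \<omega> = (\<Sum>ij\<in>join_idx n key. X (snd ij) \<omega> f)"
      unfolding gamma_mono_def mono_eval_def join_tuple_def using False by simp
    then show ?thesis using sum_snd[OF keyK cnt, of "\<lambda>i. X i \<omega> f"] by simp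
  qed
  have s2: "gamma_mono A X n key {#f, g#} \<omega> = real m * (\<Sum>i<n. X i \<omega> f * X i \<omega> g)"
    if "(f \<in> A \<and> g \<in> A) \<or> (f \<notin> A \<and> g \<notin> A)" for f g \<omega>
  proof (cases "f \<in> A")
    case True
    have "gamma_mono A X n key {#f, g#} \<omega> = (\<Sum>ij\<in>join_idx n key. X (fst ij) \<omega> f * X (fst ij) \<omega> g)"
      unfolding gamma_mono_def mono_eval_def join_tuple_def using True that by (simp add: mult.commute)
    then show ?thesis using sum_fst[OF keyK cnt, of "\<lambda>i. X i \<omega> f * X i \<omega> g"] by simp
  next
    case False
    have "gamma_mono A X n key {#f, g#} \<omega> = (\<Sum>ij\<in>join_idx n key. X (snd ij) \<omega> f * X (snd ij) \<omega> g)"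
      unfolding gamma_mono_def mono_eval_def join_tuple_def using False that by (simp add: mult.commute)
    then show ?thesis using sum_snd[OF keyK cnt, of "\<lambda>i. X i \<omega> f * X i \<omega> g"] by simp
  qed
  have s3: "gamma_mono A X n key {#a, b#} \<omega> = (\<Sum>ij\<in>join_idx n key. X (fst ij) \<omega> a * X (snd ij) \<omega> b)"
    if "a \<in> A" "b \<in> B" for a b \<omega>
    unfolding gamma_mono_def mono_eval_def join_tuple_def using that disj by (simp add: mult.commute)
  have nc2: "\<not> (\<exists>f1\<in>A. \<exists>f2\<in>B. {#f, g#} = {#f1, f2#})"
    if "(f \<in> A \<and> g \<in> A) \<or> (f \<in> B \<and> g \<in> B)" for f g
  proof
    assume "\<exists>f1\<in>A. \<exists>f2\<in>B. {#f, g#} = {#f1, f2#}"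
    then obtain f1 f2 where f1: "f1 \<in> A" and f2: "f2 \<in> B" and eq: "{#f, g#} = {#f1, f2#}" by blast
    have "f1 \<in># {#f, g#}" "f2 \<in># {#f, g#}" unfolding eq by simp_all
    then show False using f1 f2 that disj by auto
  qed
  have cross: "P.expectation (shat A B X n d key {#a, b#}) = (\<integral>x. x a * x b \<partial>D)"
    if ab: "a \<in> A" "b \<in> B" for a b
  proof -
    have aAB: "a \<in> A \<union> B" and bAB: "b \<in> A \<union> B" using ab by auto
    have isc: "\<exists>f1\<in>A. \<exists>f2\<in>B. {#a, b#} = {#f1, f2#}" using ab by blast
    have t1: "(THE f. f \<in> A \<and> f \<in># {#a, b#}) = a"
      by (rule the_equality) (use ab disj in auto)
    have t2: "(THE f. f \<in> B \<and> f \<in># {#a, b#}) = b"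
      by (rule the_equality) (use ab disj in auto)
    define T1 where "T1 \<omega> = (\<Sum>ij\<in>join_idx n key. X (fst ij) \<omega> a * X (snd ij) \<omega> b)" for \<omega>
    define T2 where "T2 \<omega> = (\<Sum>i<n. \<Sum>j<n. X i \<omega> a * X j \<omega> b)" for \<omega>
    define N where "N = real n"
    define \<alpha> where "\<alpha> = (1 - N) / (1 - real d) / (N * real m)"
    define \<beta> where "\<beta> = (N - real d) / (1 - real d) * (real m * real m) / ((N * real m) * (N * real m))"
    have sh: "shat A B X n d key {#a, b#} = (\<lambda>\<omega>. \<alpha> * T1 \<omega> + \<beta> * T2 \<omega>)"
    proof
      fix \<omega>
      have "shat A B X n d key {#a, b#} \<omega> =
          (1 - real n) / (1 - real d) * (gamma_mono A X n key {#a, b#} \<omega> / gamma_c n key)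
          + (real n - real d) / (1 - real d) * (gamma_mono A X n key {#a#} \<omega> / gamma_c n key)
            * (gamma_mono A X n key {#b#} \<omega> / gamma_c n key)"
        unfolding shat_def Let_def t1 t2 using isc by simp
      also have "\<dots> = (1 - real n) / (1 - real d) * (T1 \<omega> / (N * real m))
          + (real n - real d) / (1 - real d) * (real m * (\<Sum>i<n. X i \<omega> a) / (N * real m))
            * (real m * (\<Sum>i<n. X i \<omega> b) / (N * real m))"
        unfolding s3[OF ab] s1 c T1_def N_def by simp
      also have "(real n - real d) / (1 - real d) * (real m * (\<Sum>i<n. X i \<omega> a) / (N * real m))
            * (real m * (\<Sum>i<n. X i \<omega> b) / (N * real m)) = \<beta> * ((\<Sum>i<n. X i \<omega> a) * (\<Sum>i<n. X i \<omega> b))"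
        unfolding \<beta>_def N_def by (simp add: divide_inverse mult_ac)
      also have "(\<Sum>i<n. X i \<omega> a) * (\<Sum>i<n. X i \<omega> b) = T2 \<omega>"
        unfolding T2_def by (rule sum_product)
      also have "(1 - real n) / (1 - real d) * (T1 \<omega> / (N * real m)) = \<alpha> * T1 \<omega>"
        unfolding \<alpha>_def N_def by simp
      finally show "shat A B X n d key {#a, b#} \<omega> = \<alpha> * T1 \<omega> + \<beta> * T2 \<omega>" by simp
    qed
    define u where "u = (\<integral>x. x a * x b \<partial>D)"
    define v where "v = (\<integral>x. x a \<partial>D) * (\<integral>x. x b \<partial>D)"
    have inS: "fst ij < n \<and> snd ij < n" if "ij \<in> join_idx n key" for ij
      using that unfolding join_idx_def by auto
    have T1i: "integrable M T1" and T1e: "P.expectation T1 = N * u + (N * real m - N) * v"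
    proof -
      have h1: "integrable M (\<lambda>\<omega>. X (fst ij) \<omega> a * X (snd ij) \<omega> b)" if "ij \<in> join_idx n key" for ij
        using conjunct1[OF pf[OF conjunct1[OF inS[OF that]] conjunct2[OF inS[OF that]] aAB bAB]] .
      have h2: "P.expectation (\<lambda>\<omega>. X (fst ij) \<omega> a * X (snd ij) \<omega> b) = (if fst ij = snd ij then u else v)"
        if "ij \<in> join_idx n key" for ij
        using conjunct2[OF pf[OF conjunct1[OF inS[OF that]] conjunct2[OF inS[OF that]] aAB bAB]]
        unfolding u_def v_def .
      show "integrable M T1" unfolding T1_def[abs_def]
        by (rule P.E_Ssum(1)[OF finite_join_idx h1 h2])
      have "P.expectation T1 = (\<Sum>ij\<in>join_idx n key. if fst ij = snd ij then u else v)"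
        unfolding T1_def[abs_def] by (rule P.E_Ssum(2)[OF finite_join_idx h1 h2])
      also have "\<dots> = N * u + (N * real m - N) * v" unfolding N_def by (rule sum_diag[OF keyK cnt])
      finally show "P.expectation T1 = N * u + (N * real m - N) * v" .
    qed
    have T2i: "integrable M T2" and T2e: "P.expectation T2 = N * u + (N * N - N) * v"
    proof -
      have h1: "integrable M (\<lambda>\<omega>. X i \<omega> a * X j \<omega> b)" if "i < n" "j < n" for i j
        using conjunct1[OF pf[OF that aAB bAB]] .
      have h2: "P.expectation (\<lambda>\<omega>. X i \<omega> a * X j \<omega> b) = (if i = j then u else v)" if "i < n" "j < n" for i j
        using conjunct2[OF pf[OF that aAB bAB]] unfolding u_def v_def .
      have g1: "integrable M (\<lambda>\<omega>. \<Sum>j<n. X i \<omega> a * X j \<omega> b)" if "i < n" for i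
        by (rule P.E_Ssum(1)) (use h1 h2 that in auto)
      have g2: "P.expectation (\<lambda>\<omega>. \<Sum>j<n. X i \<omega> a * X j \<omega> b) = (\<Sum>j<n. if i = j then u else v)" if "i < n" for i
        by (rule P.E_Ssum(2)) (use h1 h2 that in auto)
      show "integrable M T2" unfolding T2_def[abs_def]
        by (rule P.E_Ssum(1)) (use g1 g2 in auto)
      have "P.expectation T2 = (\<Sum>i<n. \<Sum>j<n. if i = j then u else v)"
        unfolding T2_def[abs_def] by (rule P.E_Ssum(2)) (use g1 g2 in auto)
      also have "\<dots> = N * u + (N * N - N) * v" unfolding N_def by (rule sum_diag2)
      finally show "P.expectation T2 = N * u + (N * N - N) * v" .
    qed
    have "P.expectation (\<lambda>\<omega>. \<alpha> * T1 \<omega> + \<beta> * T2 \<omega>) = \<alpha> * P.expectation T1 + \<beta> * P.expectation T2"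
    proof -
      have i1: "integrable M (\<lambda>\<omega>. \<alpha> * T1 \<omega>)" using T1i by (rule integrable_mult_right)
      have i2: "integrable M (\<lambda>\<omega>. \<beta> * T2 \<omega>)" using T2i by (rule integrable_mult_right)
      show ?thesis using Bochner_Integration.integral_add[OF i1 i2] by simp
    qed
    also have "\<dots> = u" unfolding T1e T2e \<alpha>_def \<beta>_def
      by (rule alg) (use nmd mpos dge in \<open>simp_all add: N_def\<close>)
    finally show ?thesis unfolding sh u_def .
  qed
  from assms(17) show ?thesis
  proof
    assume sz: "size p = 1"
    then obtain f where p: "p = {#f#}" using size_1_singleton_mset by blast
    have fAB: "f \<in> A \<union> B" using assms(16) p by simp
    have nc: "\<not> (\<exists>f1\<in>A. \<exists>f2\<in>B. p = {#f1, f2#})"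
    proof
      assume "\<exists>f1\<in>A. \<exists>f2\<in>B. p = {#f1, f2#}"
      then obtain f1 f2 where "p = {#f1, f2#}" by blast
      hence "size p = 2" by simp
      thus False using sz by simp
    qed
    have eqs: "shat A B X n d key p = (\<lambda>\<omega>. real m * (\<Sum>i<n. X i \<omega> f) / gamma_c n key)"
      by (rule ext) (subst noncross[OF nc], simp only: p s1)
    have "P.expectation (shat A B X n d key p) = (\<integral>x. x f \<partial>D)"
      unfolding eqs by (rule Enorm) (use sf fAB in auto)
    moreover have "mono_eval p = (\<lambda>x. x f)" by (rule ext) (simp add: p mono_eval_def)
    ultimately show ?thesis by (simp only:)
  next
    assume sz: "size p = 2"
    have "size p = Suc 1" using sz by simp
    then obtain f q where pq0: "p = {#f#} + q" and sq: "size q = 1"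
      by (rule size_mset_SucE)
    from pq0 have pq: "p = add_mset f q" by simp
    from sq obtain g where "q = {#g#}" using size_1_singleton_mset by blast
    with pq have p: "p = {#f, g#}" by simp
    have fAB: "f \<in> A \<union> B" and gAB: "g \<in> A \<union> B" using assms(16) p by auto
    show ?thesis
    proof (cases "(f \<in> A \<and> g \<in> A) \<or> (f \<in> B \<and> g \<in> B)")
      case True
      have nc: "\<not> (\<exists>f1\<in>A. \<exists>f2\<in>B. p = {#f1, f2#})" unfolding p by (rule nc2[OF True])
      have tt: "(f \<in> A \<and> g \<in> A) \<or> (f \<notin> A \<and> g \<notin> A)" using True disj by blast
      have eqs: "shat A B X n d key p = (\<lambda>\<omega>. real m * (\<Sum>i<n. X i \<omega> f * X i \<omega> g) / gamma_c n key)"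
        by (rule ext) (subst noncross[OF nc], simp only: p s2[OF tt])
      have "P.expectation (shat A B X n d key p) = (\<integral>x. x f * x g \<partial>D)"
        unfolding eqs by (rule Enorm) (use sf2 fAB gAB in auto)
      moreover have "mono_eval p = (\<lambda>x. x f * x g)" by (rule ext) (simp add: p mono_eval_def mult.commute)
      ultimately show ?thesis by (simp only:)
    next
      case False
      then have "(f \<in> A \<and> g \<in> B) \<or> (f \<in> B \<and> g \<in> A)" using fAB gAB by blast
      then show ?thesis
      proof
        assume "f \<in> A \<and> g \<in> B"
        then have "P.expectation (shat A B X n d key p) = (\<integral>x. x f * x g \<partial>D)" using cross[of f g] p by blast
        moreover have "mono_eval p = (\<lambda>x. x f * x g)" by (rule ext) (simp add: p mono_eval_def mult.commute)
        ultimately show ?thesis by (simp only:)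
      next
        assume "f \<in> B \<and> g \<in> A"
        then have "P.expectation (shat A B X n d key {#g, f#}) = (\<integral>x. x g * x f \<partial>D)" using cross[of g f] by blast
        moreover have "{#g, f#} = p" by (simp add: p add_mset_commute)
        moreover have "mono_eval p = (\<lambda>x. x g * x f)" by (rule ext) (simp add: p mono_eval_def mult.commute)
        ultimately show ?thesis by (simp only:)
      qed
    qed
  qed
qed

end
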